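(* Assume $\Delta=0$. Let $\lambda_1,\lambda_2,\lambda_3\in K$ be such that $\lambda_ic_i\in N$ for $i=1,2,3$, and let $s_i':=s_i\,\nu_i\in G$, where $\nu_i\in N$ is the element corresponding to $\lambda_ic_i$. Then for every integer $n\ge1$: (1) $(s_1's_2')^n=(s_1s_2)^n\,b_n$ with $b_n\in N$ given by $b_n=u_n(\alpha)\big[(\alpha u_n(\alpha)\lambda_1+u_{n-1}(\alpha)\lambda_2)c_1+\alpha(u_{n+1}(\alpha)\lambda_1+u_n(\alpha)\lambda_2)c_2\big]$ if $n$ is even, and $b_n=u_n(\alpha)\big[(u_n(\alpha)\lambda_1+u_{n-1}(\alpha)\lambda_2)c_1+(\alpha u_{n+1}(\alpha)\lambda_1+u_n(\alpha)\lambda_2)c_2\big]$ if $n$ is odd; (2) $(s_1's_3')^n=(s_1s_3)^n\,b'_n$ with $b'_n=u_n(\beta)\big[(\beta u_n(\beta)\lambda_1+u_{n-1}(\beta)\lambda_3)c_1+\beta(u_{n+1}(\beta)\lambda_1+u_n(\beta)\lambda_3)c_3\big]$ if $n$ is even, and $b'_n=u_n(\beta)\big[(u_n(\beta)\lambda_1+u_{n-1}(\beta)\lambda_3)c_1+(\beta u_{n+1}(\beta)\lambda_1+u_n(\beta)\lambda_3)c_3\big]$ if $n$ is odd; (3) $(s_2's_3')^n=(s_2s_3)^n\,b''_n$ with $b''_n=u_n(\gamma)\big[(\gamma u_n(\gamma)\lambda_2+m u_{n-1}(\gamma)\lambda_3)c_2+(l u_{n+1}(\gamma)\lambda_2+\gamma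 u_n(\gamma)\lambda_3)c_3\big]$ if $n$ is even, and $b''_n=u_n(\gamma)\big[(u_n(\gamma)\lambda_2+m u_{n-1}(\gamma)\lambda_3)c_2+(l u_{n+1}(\gamma)\lambda_2+u_n(\gamma)\lambda_3)c_3\big]$ if $n$ is odd. (Products of elements of $G$ are written multiplicatively; elements of $N$ are identified with vectors of $K^2$.)
   Context: Setting. Let $p,q,r\ge 3$ be integers and $W=W(p,q,r)$ the Coxeter group with generators $s_1,s_2,s_3$ and relations $s_i^2=1$, $(s_1s_2)^p=(s_1s_3)^q=(s_2s_3)^r=1$. Let $\alpha=4\cos^2(\pi k_1/p)$, $\beta=4\cos^2(\pi k_2/q)$, $\gamma=4\cos^2(\pi k_3/r)$ with $\gcd(k_1,p)=\gcd(k_2,q)=\gcd(k_3,r)=1$ (so $0<\alpha,\beta,\gamma<4$), and let $l,m\in\mathbb{C}$ with $lm=\gamma$. Let $K\subset\mathbb{C}$ be a field containing $\alpha,\beta,\gamma,l,m$, and $M$ a $3$-dimensional $K$-vector space with basis $(a_1,a_2,a_3)$. The reflection representation $R:W\to GL(M)$ with parameters $(\alpha,\beta,\gamma;l,m)$ is defined by: for $x=\lambda_1a_1+\lambda_2a_2+\lambda_3a_3$, $R(s_1)x=x-(2\lambda_1-\alpha\lambda_2-\beta\lambda_3)a_1$, $R(s_2)x=x-(-\lambda_1+2\lambda_2-l\lambda_3)a_2$, $R(s_3)x=x-(-\lambda_1-m\lambda_2+2\lambda_3)a_3$. Put $G=R(W)$ and write $s_i$ for $R(s_i)$. Let $\Delta=8-2\alpha-2\beta-2\gamma-(\alpha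 l+\beta m)$; $R$ is reducible iff $\Delta=0$. Reducible setting. Assume $\Delta=0$. Put $b=(4-\gamma)a_1+(l+2)a_2+(m+2)a_3$; then the space of $G$-fixed vectors is $C_M(G)=Kb$ and $(b,a_2,a_3)$ is a basis of $M$. Let $N=N(G)$ be the subgroup of elements of $G$ acting trivially on $M/C_M(G)$. Each $\zeta\in N$ satisfies $\zeta(b)=b$, $\zeta(a_2)=a_2+\lambda b$, $\zeta(a_3)=a_3+\mu b$ for a unique $(\lambda,\mu)\in K^2$; the map $\zeta\mapsto(\lambda,\mu)$ is an injective group homomorphism $N\to (K^2,+)$, through which $N$ is identified with an additive subgroup of $K^2$ (and written additively). Put $c_1=(\alpha,\beta)$, $c_2=(-2,l)$, $c_3=(m,-2)\in K^2$ and, for $\zeta=(\lambda,\mu)\in K^2$, $\omega(\zeta)=-\frac{\lambda(l+2)+\mu(m+2)}{4-\gamma}$. Polynomials $u_n$. Define $u_n\in\mathbb{Z}[X]$ for $n\ge-1$ by $u_{-1}=-1$, $u_0=0$, and for $n\ge0$: $u_{n+1}=Xu_n-u_{n-1}$ if $n$ is even, $u_{n+1}=u_n-u_{n-1}$ if $n$ is odd (so $u_1=u_2=1$, $u_3=X-1$). *)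

theory Defs
  imports Complex_Main
begin

text \<open>Vectors of M are written in coordinates w.r.t. the basis (a1,a2,a3);
  we take K = complex.\<close>

type_synonym vec3 = "complex \<times> complex \<times> complex"
type_synonym vec2 = "complex \<times> complex"

definition vadd :: "vec3 \<Rightarrow> vec3 \<Rightarrow> vec3" where
  "vadd x y = (fst x + fst y, fst (snd x) + fst (snd y), snd (snd x) + snd (snd y))"

definition vsub :: "vec3 \<Rightarrow> vec3 \<Rightarrow> vec3" where
  "vsub x y = (fst x - fst y, fst (snd x) - fst (snd y), snd (snd x) - snd (snd y))"

definition vscale :: "complex \<Rightarrow> vec3 \<Rightarrow> vec3" where
  "vscale c x = (c * fst x, c * fst (snd x), c * snd (snd x))"

definition padd :: "vec2 \<Rightarrow> vec2 \<Rightarrow> vec2" where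
  "padd x y = (fst x + fst y, snd x + snd y)"

definition pscale :: "complex \<Rightarrow> vec2 \<Rightarrow> vec2" where
  "pscale c x = (c * fst x, c * snd x)"

definition refl1 :: "complex \<Rightarrow> complex \<Rightarrow> vec3 \<Rightarrow> vec3" where
  "refl1 \<alpha> \<beta> = (\<lambda>(x1, x2, x3). (x1 - (2*x1 - \<alpha>*x2 - \<beta>*x3), x2, x3))"

definition refl2 :: "complex \<Rightarrow> vec3 \<Rightarrow> vec3" where
  "refl2 l = (\<lambda>(x1, x2, x3). (x1, x2 - (- x1 + 2*x2 - l*x3), x3))"

definition refl3 :: "complex \<Rightarrow> vec3 \<Rightarrow> vec3" where
  "refl3 m = (\<lambda>(x1, x2, x3). (x1, x2, x3 - (- x1 - m*x2 + 2*x3)))"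

text \<open>G = R(W): the group generated by the three reflections (which are
  involutions, so the generated monoid is the generated group).\<close>
inductive_set reflgrp :: "complex \<Rightarrow> complex \<Rightarrow> complex \<Rightarrow> complex \<Rightarrow> (vec3 \<Rightarrow> vec3) set"
  for \<alpha> \<beta> l m where
  id_in: "id \<in> reflgrp \<alpha> \<beta> l m"
| s1_in: "g \<in> reflgrp \<alpha> \<beta> l m \<Longrightarrow> refl1 \<alpha> \<beta> \<circ> g \<in> reflgrp \<alpha> \<beta> l m"
| s2_in: "g \<in> reflgrp \<alpha> \<beta> l m \<Longrightarrow> refl2 l \<circ> g \<in> reflgrp \<alpha> \<beta> l m"
| s3_in: "g \<in> reflgrp \<alpha> \<beta> l m \<Longrightarrow> refl3 m \<circ> g \<in> reflgrp \<alpha> \<beta> l m"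

definition fixvecs :: "(vec3 \<Rightarrow> vec3) set \<Rightarrow> vec3 set" where
  "fixvecs H = {v. \<forall>g\<in>H. g v = v}"

text \<open>N(G): elements of G acting trivially on M / C_M(G).\<close>
definition Nsub :: "(vec3 \<Rightarrow> vec3) set \<Rightarrow> (vec3 \<Rightarrow> vec3) set" where
  "Nsub H = {g \<in> H. \<forall>x. vsub (g x) x \<in> fixvecs H}"

definition bvec :: "complex \<Rightarrow> complex \<Rightarrow> complex \<Rightarrow> vec3" where
  "bvec \<gamma> l m = (4 - \<gamma>, l + 2, m + 2)"

definition omega :: "complex \<Rightarrow> complex \<Rightarrow> complex \<Rightarrow> vec2 \<Rightarrow> complex" where
  "omega \<gamma> l m z = - (fst z * (l + 2) + snd z * (m + 2)) / (4 - \<gamma>)"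

text \<open>The linear map corresponding to (lambda, mu) in K^2: it fixes b and sends
  a2 to a2 + lambda b, a3 to a3 + mu b.  Writing x = x1 a1 + x2 a2 + x3 a3 =
  (x1/(4-gamma)) b + (x2 - ..) a2 + (x3 - ..) a3 gives the formula
  x |-> x + (omega x1 + lambda x2 + mu x3) b.\<close>
definition nmap :: "complex \<Rightarrow> complex \<Rightarrow> complex \<Rightarrow> vec2 \<Rightarrow> vec3 \<Rightarrow> vec3" where
  "nmap \<gamma> l m z x = vadd x (vscale (omega \<gamma> l m z * fst x + fst z * fst (snd x)
       + snd z * snd (snd x)) (bvec \<gamma> l m))"

text \<open>The polynomials u_n evaluated at a point, for n >= 0 (u_{-1} = -1 only
  serves to produce u_1 = 1).\<close>
fun uev :: "nat \<Rightarrow> complex \<Rightarrow> complex" where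
  "uev 0 X = 0"
| "uev (Suc 0) X = 1"
| "uev (Suc (Suc n)) X =
     (if even (Suc n) then X * uev (Suc n) X else uev (Suc n) X) - uev n X"

end

theory Submission
  imports Defs
begin

definition FF :: "complex \<Rightarrow> complex \<Rightarrow> complex \<Rightarrow> vec2 \<Rightarrow> vec3 \<Rightarrow> complex" where
  "FF g l m z x = omega g l m z * fst x + fst z * fst (snd x) + snd z * snd (snd x)"

lemma nmap_FF: "nmap g l m z x = vadd x (vscale (FF g l m z x) (bvec g l m))"
  by (simp add: nmap_def FF_def)

lemma omega_eq:
  assumes "g \<noteq> 4" "w*(4-g) = -(fst z*(l+2)+snd z*(m+2))"
  shows "omega g l m z = w"
proof -
  have "4 - g \<noteq> 0" using assms by simp
  then show ?thesis using assms(2) unfolding omega_def by (simp add: divide_eq_eq)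
qed

lemma om_mult:
  assumes "g \<noteq> 4"
  shows "omega g l m z * (4-g) = -(fst z*(l+2)+snd z*(m+2))"
proof -
  have "4 - g \<noteq> 0" using assms by simp
  then show ?thesis unfolding omega_def by simp
qed

lemma omega_comb:
  assumes "g \<noteq> 4"
  shows "omega g l m (x*p+y*q, x*r+y*t) = x*omega g l m (p,r) + y*omega g l m (q,t)"
proof (rule omega_eq[OF assms])
  have a: "omega g l m (p,r) * (4-g) = -(p*(l+2)+r*(m+2))" using om_mult[OF assms, of l m "(p,r)"] by simp
  have b: "omega g l m (q,t) * (4-g) = -(q*(l+2)+t*(m+2))" using om_mult[OF assms, of l m "(q,t)"] by simp
  have "(x*omega g l m (p,r) + y*omega g l m (q,t))*(4-g) = x*(omega g l m (p,r) * (4-g)) + y*(omega g l m (q,t) * (4-g))"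
    by (simp add: algebra_simps)
  also have "\<dots> = x*(-(p*(l+2)+r*(m+2))) + y*(-(q*(l+2)+t*(m+2)))" by (simp only: a b)
  also have "\<dots> = -(fst (x*p+y*q, x*r+y*t)*(l+2)+snd (x*p+y*q, x*r+y*t)*(m+2))" by (simp add: algebra_simps)
  finally show "(x*omega g l m (p,r) + y*omega g l m (q,t))*(4-g) = -(fst (x*p+y*q, x*r+y*t)*(l+2)+snd (x*p+y*q, x*r+y*t)*(m+2))" .
qed

lemma FF_b: assumes "g \<noteq> 4" shows "FF g l m z (bvec g l m) = 0"
proof -
  have "4 - g \<noteq> 0" using assms by simp
  then show ?thesis by (simp add: FF_def omega_def bvec_def)
qed

lemma FF_vadd: "FF g l m z (vadd x (vscale t v)) = FF g l m z x + t * FF g l m z v"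
  by (simp add: FF_def vadd_def vscale_def algebra_simps)

lemma nmap_comp:
  assumes "g \<noteq> 4"
  shows "nmap g l m z \<circ> nmap g l m w = nmap g l m (padd z w)"
proof
  fix x
  have o: "omega g l m (padd z w) = omega g l m z + omega g l m w"
    using omega_comb[OF assms, where x=1 and y=1 and p="fst z" and q="fst w" and r="snd z" and t="snd w" and l=l and m=m] by (simp add: padd_def)
  show "(nmap g l m z \<circ> nmap g l m w) x = nmap g l m (padd z w) x"
    unfolding o_def nmap_FF FF_vadd FF_b[OF assms]
    by (simp add: FF_def o) (simp add: vadd_def vscale_def padd_def algebra_simps)
qed

lemma conj_gen:
  assumes "\<And>x t. s (vadd x (vscale t (bvec g l m))) = vadd (s x) (vscale t (bvec g l m))"
    and "\<And>x. FF g l m z (s x) = FF g l m z' x"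
  shows "nmap g l m z \<circ> s = s \<circ> nmap g l m z'"
  by (rule ext) (simp add: nmap_FF assms)

definition Ec :: "vec2 \<Rightarrow> vec2 \<Rightarrow> complex \<Rightarrow> complex \<Rightarrow> vec2" where
  "Ec c c' x y = (x*fst c + y*fst c', x*snd c + y*snd c')"

lemma omega_Ec: "g \<noteq> 4 \<Longrightarrow> omega g l m (Ec c c' x y) = x*omega g l m c + y*omega g l m c'"
  using omega_comb[of g l m x "fst c" y "fst c'" "snd c" "snd c'"] by (simp add: Ec_def)

lemma om_c1: assumes "g \<noteq> 4" "8 - 2*a - 2*b - 2*g - (a*l + b*m) = 0"
  shows "omega g l m (a, b) = -2"
  apply (rule omega_eq[OF assms(1)]) apply (simp only: fst_conv snd_conv) using assms(2) by algebra

lemma om_c2: assumes "g \<noteq> 4" "l*m = g"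
  shows "omega g l m (-2, l) = 1"
  by (rule omega_eq[OF assms(1)]) (use assms(2) in \<open>simp add: algebra_simps\<close>)

lemma om_c3: assumes "g \<noteq> 4" "l*m = g"
  shows "omega g l m (m, -2) = 1"
  by (rule omega_eq[OF assms(1)]) (use assms(2) in \<open>simp add: algebra_simps\<close>)

lemma refl1_b: assumes "8 - 2*a - 2*b - 2*g - (a*l + b*m) = 0"
  shows "refl1 a b (bvec g l m) = bvec g l m"
  using assms by (simp add: refl1_def bvec_def) algebra

lemma refl2_b: assumes "l*m = g"
  shows "refl2 l (bvec g l m) = bvec g l m"
  using assms by (simp add: refl2_def bvec_def algebra_simps)

lemma refl3_b: assumes "l*m = g"
  shows "refl3 m (bvec g l m) = bvec g l m"
  using assms by (simp add: refl3_def bvec_def algebra_simps)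

lemma refl1_lin: "refl1 a b (vadd x (vscale t v)) = vadd (refl1 a b x) (vscale t (refl1 a b v))"
  by (cases x; cases v) (simp add: refl1_def vadd_def vscale_def algebra_simps)
lemma refl2_lin: "refl2 l (vadd x (vscale t v)) = vadd (refl2 l x) (vscale t (refl2 l v))"
  by (cases x; cases v) (simp add: refl2_def vadd_def vscale_def algebra_simps)
lemma refl3_lin: "refl3 m (vadd x (vscale t v)) = vadd (refl3 m x) (vscale t (refl3 m v))"
  by (cases x; cases v) (simp add: refl3_def vadd_def vscale_def algebra_simps)

lemma conj_c11:
  assumes h1: "g \<noteq> 4" and h2: "8 - 2*a - 2*b - 2*g - (a*l + b*m) = 0" and h3: "l*m = g"
  shows "nmap g l m (Ec (a, b) (-2, l) x y) \<circ> refl1 a b = refl1 a b \<circ> nmap g l m (Ec (a, b) (-2, l) (y-x) y)"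
proof (rule conj_gen)
  show "\<And>v t. refl1 a b (vadd v (vscale t (bvec g l m))) = vadd (refl1 a b v) (vscale t (bvec g l m))"
    using h1 h2 h3 by (simp add: refl1_lin refl1_b)
  fix v :: vec3
  obtain v1 v2 v3 where v: "v = (v1,v2,v3)" by (cases v) auto
  show "FF g l m (Ec (a, b) (-2, l) x y) (refl1 a b v) = FF g l m (Ec (a, b) (-2, l) (y-x) y) v"
    unfolding FF_def omega_Ec[OF h1] by (simp add: v om_c1[OF h1 h2] om_c2[OF h1 h3] refl1_def Ec_def algebra_simps)
qed

lemma conj_c12:
  assumes h1: "g \<noteq> 4" and h2: "8 - 2*a - 2*b - 2*g - (a*l + b*m) = 0" and h3: "l*m = g"
  shows "nmap g l m (Ec (a, b) (-2, l) x y) \<circ> refl2 l = refl2 l \<circ> nmap g l m (Ec (a, b) (-2, l) x (a*x - y))"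
proof (rule conj_gen)
  show "\<And>v t. refl2 l (vadd v (vscale t (bvec g l m))) = vadd (refl2 l v) (vscale t (bvec g l m))"
    using h1 h2 h3 by (simp add: refl2_lin refl2_b)
  fix v :: vec3
  obtain v1 v2 v3 where v: "v = (v1,v2,v3)" by (cases v) auto
  show "FF g l m (Ec (a, b) (-2, l) x y) (refl2 l v) = FF g l m (Ec (a, b) (-2, l) x (a*x - y)) v"
    unfolding FF_def omega_Ec[OF h1] by (simp add: v om_c1[OF h1 h2] om_c2[OF h1 h3] refl2_def Ec_def algebra_simps)
qed

lemma conj_c21:
  assumes h1: "g \<noteq> 4" and h2: "8 - 2*a - 2*b - 2*g - (a*l + b*m) = 0" and h3: "l*m = g"
  shows "nmap g l m (Ec (a, b) (m, -2) x y) \<circ> refl1 a b = refl1 a b \<circ> nmap g l m (Ec (a, b) (m, -2) (y-x) y)"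
proof (rule conj_gen)
  show "\<And>v t. refl1 a b (vadd v (vscale t (bvec g l m))) = vadd (refl1 a b v) (vscale t (bvec g l m))"
    using h1 h2 h3 by (simp add: refl1_lin refl1_b)
  fix v :: vec3
  obtain v1 v2 v3 where v: "v = (v1,v2,v3)" by (cases v) auto
  show "FF g l m (Ec (a, b) (m, -2) x y) (refl1 a b v) = FF g l m (Ec (a, b) (m, -2) (y-x) y) v"
    unfolding FF_def omega_Ec[OF h1] by (simp add: v om_c1[OF h1 h2] om_c3[OF h1 h3] refl1_def Ec_def algebra_simps)
qed

lemma conj_c23:
  assumes h1: "g \<noteq> 4" and h2: "8 - 2*a - 2*b - 2*g - (a*l + b*m) = 0" and h3: "l*m = g"
  shows "nmap g l m (Ec (a, b) (m, -2) x y) \<circ> refl3 m = refl3 m \<circ> nmap g l m (Ec (a, b) (m, -2) x (b*x - y))"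
proof (rule conj_gen)
  show "\<And>v t. refl3 m (vadd v (vscale t (bvec g l m))) = vadd (refl3 m v) (vscale t (bvec g l m))"
    using h1 h2 h3 by (simp add: refl3_lin refl3_b)
  fix v :: vec3
  obtain v1 v2 v3 where v: "v = (v1,v2,v3)" by (cases v) auto
  show "FF g l m (Ec (a, b) (m, -2) x y) (refl3 m v) = FF g l m (Ec (a, b) (m, -2) x (b*x - y)) v"
    unfolding FF_def omega_Ec[OF h1] by (simp add: v om_c1[OF h1 h2] om_c3[OF h1 h3] refl3_def Ec_def algebra_simps)
qed

lemma conj_c32:
  assumes h1: "g \<noteq> 4" and h2: "8 - 2*a - 2*b - 2*g - (a*l + b*m) = 0" and h3: "l*m = g"
  shows "nmap g l m (Ec (-2, l) (m, -2) x y) \<circ> refl2 l = refl2 l \<circ> nmap g l m (Ec (-2, l) (m, -2) (m*y - x) y)"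
proof (rule conj_gen)
  show "\<And>v t. refl2 l (vadd v (vscale t (bvec g l m))) = vadd (refl2 l v) (vscale t (bvec g l m))"
    using h1 h2 h3 by (simp add: refl2_lin refl2_b)
  fix v :: vec3
  obtain v1 v2 v3 where v: "v = (v1,v2,v3)" by (cases v) auto
  show "FF g l m (Ec (-2, l) (m, -2) x y) (refl2 l v) = FF g l m (Ec (-2, l) (m, -2) (m*y - x) y) v"
    unfolding FF_def omega_Ec[OF h1] by (simp add: v om_c2[OF h1 h3] om_c3[OF h1 h3] refl2_def Ec_def algebra_simps)
qed

lemma conj_c33:
  assumes h1: "g \<noteq> 4" and h2: "8 - 2*a - 2*b - 2*g - (a*l + b*m) = 0" and h3: "l*m = g"
  shows "nmap g l m (Ec (-2, l) (m, -2) x y) \<circ> refl3 m = refl3 m \<circ> nmap g l m (Ec (-2, l) (m, -2) x (l*x - y))"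
proof (rule conj_gen)
  show "\<And>v t. refl3 m (vadd v (vscale t (bvec g l m))) = vadd (refl3 m v) (vscale t (bvec g l m))"
    using h1 h2 h3 by (simp add: refl3_lin refl3_b)
  fix v :: vec3
  obtain v1 v2 v3 where v: "v = (v1,v2,v3)" by (cases v) auto
  show "FF g l m (Ec (-2, l) (m, -2) x y) (refl3 m v) = FF g l m (Ec (-2, l) (m, -2) x (l*x - y)) v"
    unfolding FF_def omega_Ec[OF h1] by (simp add: v om_c2[OF h1 h3] om_c3[OF h1 h3] refl3_def Ec_def algebra_simps)
qed

lemma aux1: "A^2 + X*B^2 - X*A*B = (1::complex) \<Longrightarrow> X*(A-B)^2 + A^2 - X*(A-B)*A = 1" by algebra
lemma aux2: "X*A^2 + B^2 - X*A*B = (1::complex) \<Longrightarrow> (X*A-B)^2 + X*A^2 - X*(X*A-B)*A = 1" by algebra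

lemma cass: "(if odd (Suc j) then (uev (Suc j) X)^2 + X*(uev j X)^2 - X*uev (Suc j) X*uev j X
   else X*(uev (Suc j) X)^2 + (uev j X)^2 - X*uev (Suc j) X * uev j X) = 1"
proof (induction j)
  case 0 then show ?case by simp
next
  case (Suc j)
  show ?case
  proof (cases "even j")
    case True
    then have "(uev (Suc j) X)^2 + X*(uev j X)^2 - X*uev (Suc j) X*uev j X = 1" using Suc by simp
    moreover have "uev (Suc (Suc j)) X = uev (Suc j) X - uev j X" using True by simp
    ultimately show ?thesis using True aux1 by simp
  next
    case False
    then have "X*(uev (Suc j) X)^2 + (uev j X)^2 - X*uev (Suc j) X * uev j X = 1" using Suc by simp
    moreover have "uev (Suc (Suc j)) X = X * uev (Suc j) X - uev j X" using False by simp
    ultimately show ?thesis using False aux2 by simp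
  qed
qed

definition Tg :: "complex \<Rightarrow> complex \<Rightarrow> vec2 \<Rightarrow> vec2" where
  "Tg p q z = (p*snd z - fst z, q*(p*snd z - fst z) - snd z)"

fun Bs :: "(vec2 \<Rightarrow> vec2) \<Rightarrow> vec2 \<Rightarrow> nat \<Rightarrow> vec2" where
  "Bs T d 0 = (0,0)"
| "Bs T d (Suc n) = padd (T (Bs T d n)) d"

definition cl :: "complex \<Rightarrow> complex \<Rightarrow> complex \<Rightarrow> complex \<Rightarrow> nat \<Rightarrow> vec2" where
  "cl p q lam mu n = (let X = p*q; u = (\<lambda>k. uev k X) in
     if even n then (u n*(X*u n*lam + p*u(n-1)*mu), u n*(q*u(n+1)*lam + X*u n*mu))
     else (u n*(u n*lam + p*u(n-1)*mu), u n*(q*u(n+1)*lam + u n*mu)))"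

lemma step_even:
  fixes A B p q lam mu :: complex
  assumes "A^2 + p*q*B^2 - p*q*A*B = 1"
  shows "padd (Tg p q (A*(A*lam + p*B*mu), A*(q*(A-B)*lam + A*mu))) (lam, q*lam+mu)
       = ((A-B)*(p*q*(A-B)*lam + p*A*mu), (A-B)*(q*(p*q*(A-B)-A)*lam + p*q*(A-B)*mu))"
  unfolding Tg_def padd_def prod_eq_iff fst_conv snd_conv apply (intro conjI) using assms by algebra+

lemma step_odd:
  fixes A B p q lam mu :: complex
  assumes "p*q*A^2 + B^2 - p*q*A*B = 1"
  shows "padd (Tg p q (A*(p*q*A*lam + p*B*mu), A*(q*(p*q*A-B)*lam + p*q*A*mu))) (lam, q*lam+mu)
       = ((p*q*A-B)*((p*q*A-B)*lam + p*A*mu), (p*q*A-B)*(q*(p*q*A-B-A)*lam + (p*q*A-B)*mu))"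
  unfolding Tg_def padd_def prod_eq_iff fst_conv snd_conv apply (intro conjI) using assms by algebra+

lemma Bs_cl: "n \<ge> 1 \<Longrightarrow> Bs (Tg p q) (lam, q*lam + mu) n = cl p q lam mu n"
proof (induction n rule: dec_induct)
  case base
  then show ?case by (simp add: cl_def Tg_def padd_def)
next
  case (step n)
  then obtain j where n: "n = Suc j" by (cases n) auto
  obtain A where A: "uev (Suc j) (p*q) = A" by blast
  obtain B where B: "uev j (p*q) = B" by blast
  have "Bs (Tg p q) (lam, q*lam + mu) (Suc n) = padd (Tg p q (cl p q lam mu n)) (lam, q*lam + mu)"
    using step.IH by simp
  also have "\<dots> = cl p q lam mu (Suc n)"
  proof (cases "even j")
    case True
    have e1: "uev (Suc (Suc j)) (p*q) = A - B" using True A B by simp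
    have e2: "uev (Suc (Suc (Suc j))) (p*q) = p*q*(A - B) - A" using True e1 A by simp
    have c': "A^2 + p*q*B^2 - p*q*A*B = 1" using cass[of j "p*q"] True A B by simp
    have "cl p q lam mu n = (A*(A*lam + p*B*mu), A*(q*(A-B)*lam + A*mu))"
      using True by (simp add: n cl_def e1 A B Let_def)
    moreover have "cl p q lam mu (Suc n) = ((A-B)*(p*q*(A-B)*lam + p*A*mu), (A-B)*(q*(p*q*(A-B)-A)*lam + p*q*(A-B)*mu))"
      using True by (simp add: n cl_def e1 e2 A B Let_def)
    ultimately show ?thesis using step_even[OF c'] by simp
  next
    case False
    have e1: "uev (Suc (Suc j)) (p*q) = p*q*A - B" using False A B by simp
    have e2: "uev (Suc (Suc (Suc j))) (p*q) = p*q*A - B - A" using False e1 A by simp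
    have c': "p*q*A^2 + B^2 - p*q*A*B = 1" using cass[of j "p*q"] False A B by simp
    have "cl p q lam mu n = (A*(p*q*A*lam + p*B*mu), A*(q*(p*q*A-B)*lam + p*q*A*mu))"
      using False by (simp add: n cl_def e1 A B Let_def)
    moreover have "cl p q lam mu (Suc n) = ((p*q*A-B)*((p*q*A-B)*lam + p*A*mu), (p*q*A-B)*(q*(p*q*A-B-A)*lam + (p*q*A-B)*mu))"
      using False by (simp add: n cl_def e1 e2 A B Let_def)
    ultimately show ?thesis using step_odd[OF c'] by simp
  qed
  finally show ?case .
qed


lemma iter:
  assumes add: "\<And>z w. E z \<circ> E w = E (padd z w)" and cj: "\<And>z. E z \<circ> P = P \<circ> E (T z)"
    and e0: "E (0,0) = id"
  shows "(P \<circ> E d)^^n = P^^n \<circ> E (Bs T d n)"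
proof (induction n)
  case 0 then show ?case by (simp add: e0)
next
  case (Suc n)
  have add': "\<And>z w x. E z (E w x) = E (padd z w) x" using add by (metis comp_apply)
  have cj': "\<And>z x. E z (P x) = P (E (T z) x)" using cj by (metis comp_apply)
  show ?case
  proof
    fix x
    have "((P \<circ> E d)^^Suc n) x = ((P \<circ> E d)^^n) (P (E d x))" by (simp only: funpow_Suc_right o_apply)
    also have "\<dots> = (P^^n) (E (Bs T d n) (P (E d x)))" by (simp only: Suc.IH o_apply)
    also have "\<dots> = (P^^n) (P (E (padd (T (Bs T d n)) d) x))" by (simp add: cj' add')
    also have "\<dots> = (P^^Suc n \<circ> E (Bs T d (Suc n))) x" by (simp only: funpow_Suc_right o_apply Bs.simps)
    finally show "((P \<circ> E d)^^Suc n) x = (P^^Suc n \<circ> E (Bs T d (Suc n))) x" .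
  qed
qed

lemma grp_comp: "f \<in> reflgrp a b l m \<Longrightarrow> h \<in> reflgrp a b l m \<Longrightarrow> f \<circ> h \<in> reflgrp a b l m"
  by (induction f rule: reflgrp.induct) (auto simp: comp_assoc intro: reflgrp.intros)

lemma grp_pow: "f \<in> reflgrp a b l m \<Longrightarrow> f^^n \<in> reflgrp a b l m"
  by (induction n) (auto intro: grp_comp reflgrp.id_in)

lemma refl1_in: "refl1 a b \<in> reflgrp a b l m"
  using reflgrp.s1_in[OF reflgrp.id_in] by simp
lemma refl2_in: "refl2 l \<in> reflgrp a b l m"
  using reflgrp.s2_in[OF reflgrp.id_in] by simp
lemma refl3_in: "refl3 m \<in> reflgrp a b l m"
  using reflgrp.s3_in[OF reflgrp.id_in] by simp

lemma refl1_inv: "refl1 a b \<circ> refl1 a b = id"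
  by (rule ext) (auto simp: refl1_def split: prod.splits)
lemma refl2_inv: "refl2 l \<circ> refl2 l = id"
  by (rule ext) (auto simp: refl2_def split: prod.splits)
lemma refl3_inv: "refl3 m \<circ> refl3 m = id"
  by (rule ext) (auto simp: refl3_def split: prod.splits)

lemma pow_inv: fixes P Q :: "'a \<Rightarrow> 'a" assumes "Q \<circ> P = id" shows "Q^^n \<circ> P^^n = id"
proof (induction n)
  case 0 then show ?case by simp
next
  case (Suc n)
  have q: "Q^^Suc n = Q^^n \<circ> Q" by (rule funpow_Suc_right)
  have p: "P^^Suc n = P \<circ> P^^n" by simp
  have "Q^^Suc n \<circ> P^^Suc n = Q^^n \<circ> (Q \<circ> P) \<circ> P^^n" unfolding q p by (simp only: comp_assoc)
  then show ?case by (simp only: assms comp_id Suc.IH)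
qed

lemma grp_fix:
  assumes "8 - 2*a - 2*b - 2*g - (a*l + b*m) = 0" "l*m = g"
  shows "f \<in> reflgrp a b l m \<Longrightarrow> f (vscale c (bvec g l m)) = vscale c (bvec g l m)"
proof (induction f rule: reflgrp.induct)
  case id_in then show ?case by simp
next
  case (s1_in f) then show ?case
    using refl1_lin[of a b "(0,0,0)" c "bvec g l m"] refl1_b[OF assms(1)]
    by (simp add: vadd_def vscale_def refl1_def)
next
  case (s2_in f) then show ?case
    using refl2_lin[of l "(0,0,0)" c "bvec g l m"] refl2_b[OF assms(2)]
    by (simp add: vadd_def vscale_def refl2_def)
next
  case (s3_in f) then show ?case
    using refl3_lin[of m "(0,0,0)" c "bvec g l m"] refl3_b[OF assms(2)]
    by (simp add: vadd_def vscale_def refl3_def)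
qed


lemma case_gen:
  fixes sA sB :: "vec3 \<Rightarrow> vec3" and c c' :: vec2
  assumes h1: "g \<noteq> 4" and h2: "8 - 2*a - 2*b - 2*g - (a*l + b*m) = 0" and h3: "l*m = g"
   and sAG: "sA \<in> reflgrp a b l m" and sBG: "sB \<in> reflgrp a b l m"
   and iA: "sA \<circ> sA = id" and iB: "sB \<circ> sB = id"
   and n1: "nmap g l m (pscale lam c) \<in> reflgrp a b l m"
   and n2: "nmap g l m (pscale mu c') \<in> reflgrp a b l m"
   and cA: "\<And>x y. nmap g l m (Ec c c' x y) \<circ> sA = sA \<circ> nmap g l m (Ec c c' (p*y - x) y)"
   and cB: "\<And>x y. nmap g l m (Ec c c' x y) \<circ> sB = sB \<circ> nmap g l m (Ec c c' x (q*x - y))"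
   and n1': "n \<ge> 1"
  shows "nmap g l m (Ec c c' (fst (cl p q lam mu n)) (snd (cl p q lam mu n))) \<in> Nsub (reflgrp a b l m)
    \<and> ((sA \<circ> nmap g l m (pscale lam c)) \<circ> (sB \<circ> nmap g l m (pscale mu c')))^^n
       = (sA \<circ> sB)^^n \<circ> nmap g l m (Ec c c' (fst (cl p q lam mu n)) (snd (cl p q lam mu n)))"
proof -
  define E where "E z = nmap g l m (Ec c c' (fst z) (snd z))" for z
  have add: "E z \<circ> E w = E (padd z w)" for z w
  proof -
    have "padd (Ec c c' (fst z) (snd z)) (Ec c c' (fst w) (snd w)) = Ec c c' (fst (padd z w)) (snd (padd z w))"
      by (simp add: Ec_def padd_def algebra_simps)
    then show ?thesis unfolding E_def nmap_comp[OF h1] by simp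
  qed
  have e0: "E (0,0) = id"
    by (rule ext) (simp add: E_def Ec_def nmap_def omega_def vadd_def vscale_def)
  have cj: "E z \<circ> (sA \<circ> sB) = (sA \<circ> sB) \<circ> E (Tg p q z)" for z
  proof -
    have "E z \<circ> (sA \<circ> sB) = (E z \<circ> sA) \<circ> sB" by (simp add: comp_assoc)
    also have "\<dots> = sA \<circ> (nmap g l m (Ec c c' (p * snd z - fst z) (snd z)) \<circ> sB)"
      unfolding E_def cA by (simp add: comp_assoc)
    also have "\<dots> = (sA \<circ> sB) \<circ> E (Tg p q z)"
      unfolding cB E_def Tg_def by (simp add: comp_assoc)
    finally show ?thesis .
  qed
  have p1: "nmap g l m (pscale lam c) = E (lam, 0)" by (simp add: E_def Ec_def pscale_def)
  have p2: "nmap g l m (pscale mu c') = E (0, mu)" by (simp add: E_def Ec_def pscale_def)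
  have dd: "(sA \<circ> nmap g l m (pscale lam c)) \<circ> (sB \<circ> nmap g l m (pscale mu c'))
        = (sA \<circ> sB) \<circ> E (lam, q*lam + mu)"
  proof -
    have "(sA \<circ> nmap g l m (pscale lam c)) \<circ> (sB \<circ> nmap g l m (pscale mu c'))
          = sA \<circ> (nmap g l m (Ec c c' lam 0) \<circ> sB) \<circ> E (0, mu)"
      unfolding p1 p2 by (simp add: E_def comp_assoc)
    also have "\<dots> = sA \<circ> sB \<circ> (E (lam, q*lam - 0) \<circ> E (0, mu))"
      unfolding cB by (simp add: E_def comp_assoc)
    also have "\<dots> = (sA \<circ> sB) \<circ> E (lam, q*lam + mu)"
      unfolding add by (simp add: padd_def)
    finally show ?thesis .
  qed
  have it: "((sA \<circ> nmap g l m (pscale lam c)) \<circ> (sB \<circ> nmap g l m (pscale mu c')))^^n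
       = (sA \<circ> sB)^^n \<circ> E (cl p q lam mu n)"
    unfolding dd iter[of E "sA \<circ> sB" "Tg p q", OF add cj e0] Bs_cl[OF n1'] ..
  have XG: "(sA \<circ> nmap g l m (pscale lam c)) \<circ> (sB \<circ> nmap g l m (pscale mu c')) \<in> reflgrp a b l m"
    by (intro grp_comp sAG sBG n1 n2)
  have inv: "(sB \<circ> sA)^^n \<circ> (sA \<circ> sB)^^n = id"
    by (rule pow_inv) (metis comp_assoc iA iB comp_id)
  have "E (cl p q lam mu n) = (sB \<circ> sA)^^n \<circ> ((sA \<circ> sB)^^n \<circ> E (cl p q lam mu n))"
    unfolding comp_assoc[symmetric] inv by simp
  also have "\<dots> \<in> reflgrp a b l m"
    unfolding it[symmetric] by (intro grp_comp grp_pow XG sAG sBG)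
  finally have EG: "E (cl p q lam mu n) \<in> reflgrp a b l m" .
  have fx: "vsub (E (cl p q lam mu n) x) x \<in> fixvecs (reflgrp a b l m)" for x
  proof -
    have "vsub (E (cl p q lam mu n) x) x = vscale (FF g l m (Ec c c' (fst (cl p q lam mu n)) (snd (cl p q lam mu n))) x) (bvec g l m)"
      unfolding E_def nmap_FF by (cases x) (simp add: vadd_def vsub_def vscale_def)
    then show ?thesis using grp_fix[OF h2 h3] by (simp add: fixvecs_def)
  qed
  show ?thesis using EG fx it unfolding Nsub_def E_def by simp
qed


lemma gamma_ne4:
  fixes k3 :: int and r :: nat
  assumes "r \<ge> 3" "gcd k3 (int r) = 1"
  shows "(of_real (4 * (cos (pi * of_int k3 / of_nat r))\<^sup>2) :: complex) \<noteq> 4"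
proof
  assume "(of_real (4 * (cos (pi * of_int k3 / of_nat r))\<^sup>2) :: complex) = 4"
  then have "4 * (cos (pi * of_int k3 / of_nat r))\<^sup>2 = (4::real)"
    by (metis of_real_eq_iff of_real_numeral)
  then have "(cos (pi * of_int k3 / of_nat r))\<^sup>2 = 1" by simp
  then have "sin (pi * of_int k3 / of_nat r) = 0"
    using sin_cos_squared_add[of "pi * of_int k3 / of_nat r"] by simp
  then obtain i :: int where i: "pi * of_int k3 / of_nat r = of_int i * pi"
    by (auto simp: sin_zero_iff_int2)
  have rpos: "real r > 0" using assms by simp
  from i have "of_int k3 = of_int i * real r" using rpos
    by (simp add: field_simps)
  then have "k3 = i * int r" by (metis of_int_eq_iff of_int_mult of_int_of_nat_eq)
  then have "int r dvd k3" by simp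
  then have "gcd k3 (int r) = int r" by (simp add: gcd_proj2_if_dvd)
  then show False using assms by simp
qed

theorem proposition3:
  fixes p q r :: nat and k1 k2 k3 :: int
    and \<alpha> \<beta> \<gamma> l m lam1 lam2 lam3 :: complex and n :: nat
  assumes "p \<ge> 3" "q \<ge> 3" "r \<ge> 3"
    and "gcd k1 (int p) = 1" "gcd k2 (int q) = 1" "gcd k3 (int r) = 1"
    and "\<alpha> = of_real (4 * (cos (pi * of_int k1 / of_nat p))\<^sup>2)"
    and "\<beta> = of_real (4 * (cos (pi * of_int k2 / of_nat q))\<^sup>2)"
    and "\<gamma> = of_real (4 * (cos (pi * of_int k3 / of_nat r))\<^sup>2)"
    and "l * m = \<gamma>"
    and "8 - 2*\<alpha> - 2*\<beta> - 2*\<gamma> - (\<alpha>*l + \<beta>*m) = 0"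
    and "nmap \<gamma> l m (pscale lam1 (\<alpha>, \<beta>)) \<in> Nsub (reflgrp \<alpha> \<beta> l m)"
    and "nmap \<gamma> l m (pscale lam2 (-2, l)) \<in> Nsub (reflgrp \<alpha> \<beta> l m)"
    and "nmap \<gamma> l m (pscale lam3 (m, -2)) \<in> Nsub (reflgrp \<alpha> \<beta> l m)"
    and "n \<ge> 1"
  shows
   "let G = reflgrp \<alpha> \<beta> l m; c1 = (\<alpha>, \<beta>); c2 = (-2, l); c3 = (m, -2);
        s1 = refl1 \<alpha> \<beta>; s2 = refl2 l; s3 = refl3 m;
        s1' = s1 \<circ> nmap \<gamma> l m (pscale lam1 c1);
        s2' = s2 \<circ> nmap \<gamma> l m (pscale lam2 c2);
        s3' = s3 \<circ> nmap \<gamma> l m (pscale lam3 c3);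
        u = (\<lambda>k x. uev k x);
        bn = (if even n then
                pscale (u n \<alpha>) (padd (pscale (\<alpha> * u n \<alpha> * lam1 + u (n-1) \<alpha> * lam2) c1)
                                     (pscale (\<alpha> * (u (n+1) \<alpha> * lam1 + u n \<alpha> * lam2)) c2))
              else
                pscale (u n \<alpha>) (padd (pscale (u n \<alpha> * lam1 + u (n-1) \<alpha> * lam2) c1)
                                     (pscale (\<alpha> * u (n+1) \<alpha> * lam1 + u n \<alpha> * lam2) c2)));
        bn' = (if even n then
                pscale (u n \<beta>) (padd (pscale (\<beta> * u n \<beta> * lam1 + u (n-1) \<beta> * lam3) c1)
                                     (pscale (\<beta> * (u (n+1) \<beta> * lam1 + u n \<beta> * lam3)) c3))
              else
                pscale (u n \<beta>) (padd (pscale (u n \<beta> * lam1 + u (n-1) \<beta> * lam3) c1)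
                                     (pscale (\<beta> * u (n+1) \<beta> * lam1 + u n \<beta> * lam3) c3)));
        bn'' = (if even n then
                pscale (u n \<gamma>) (padd (pscale (\<gamma> * u n \<gamma> * lam2 + m * u (n-1) \<gamma> * lam3) c2)
                                     (pscale (l * u (n+1) \<gamma> * lam2 + \<gamma> * u n \<gamma> * lam3) c3))
              else
                pscale (u n \<gamma>) (padd (pscale (u n \<gamma> * lam2 + m * u (n-1) \<gamma> * lam3) c2)
                                     (pscale (l * u (n+1) \<gamma> * lam2 + u n \<gamma> * lam3) c3)))
    in nmap \<gamma> l m bn \<in> Nsub G \<and> (s1' \<circ> s2') ^^ n = (s1 \<circ> s2) ^^ n \<circ> nmap \<gamma> l m bn
     \<and> nmap \<gamma> l m bn' \<in> Nsub G \<and> (s1' \<circ> s3') ^^ n = (s1 \<circ> s3) ^^ n \<circ> nmap \<gamma> l m bn'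
     \<and> nmap \<gamma> l m bn'' \<in> Nsub G \<and> (s2' \<circ> s3') ^^ n = (s2 \<circ> s3) ^^ n \<circ> nmap \<gamma> l m bn''"
proof -
  note g4 = gamma_ne4[OF assms(3,6)]
  have g4: "\<gamma> \<noteq> 4" using g4 assms(9) by simp
  note D = assms(11) and lm = assms(10)
  have N1: "nmap \<gamma> l m (pscale lam1 (\<alpha>, \<beta>)) \<in> reflgrp \<alpha> \<beta> l m" using assms(12) by (simp add: Nsub_def)
  have N2: "nmap \<gamma> l m (pscale lam2 (-2, l)) \<in> reflgrp \<alpha> \<beta> l m" using assms(13) by (simp add: Nsub_def)
  have N3: "nmap \<gamma> l m (pscale lam3 (m, -2)) \<in> reflgrp \<alpha> \<beta> l m" using assms(14) by (simp add: Nsub_def)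
  have cA1: "\<And>x y. nmap \<gamma> l m (Ec (\<alpha>,\<beta>) (-2,l) x y) \<circ> refl1 \<alpha> \<beta> = refl1 \<alpha> \<beta> \<circ> nmap \<gamma> l m (Ec (\<alpha>,\<beta>) (-2,l) (1*y - x) y)"
    using conj_c11[OF g4 D lm] by simp
  have cA2: "\<And>x y. nmap \<gamma> l m (Ec (\<alpha>,\<beta>) (m,-2) x y) \<circ> refl1 \<alpha> \<beta> = refl1 \<alpha> \<beta> \<circ> nmap \<gamma> l m (Ec (\<alpha>,\<beta>) (m,-2) (1*y - x) y)"
    using conj_c21[OF g4 D lm] by simp
  note C1 = case_gen[OF g4 D lm refl1_in refl2_in refl1_inv refl2_inv N1 N2 cA1 conj_c12[OF g4 D lm] assms(15)]
  note C2 = case_gen[OF g4 D lm refl1_in refl3_in refl1_inv refl3_inv N1 N3 cA2 conj_c23[OF g4 D lm] assms(15)]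
  note C3 = case_gen[OF g4 D lm refl2_in refl3_in refl2_inv refl3_inv N2 N3 conj_c32[OF g4 D lm] conj_c33[OF g4 D lm] assms(15)]
  have ml: "m * l = \<gamma>" using lm by (simp add: mult.commute)
  have b1: "(if even n then
                pscale (uev n \<alpha>) (padd (pscale (\<alpha> * uev n \<alpha> * lam1 + uev (n-1) \<alpha> * lam2) (\<alpha>, \<beta>))
                                     (pscale (\<alpha> * (uev (n+1) \<alpha> * lam1 + uev n \<alpha> * lam2)) (-2, l)))
              else
                pscale (uev n \<alpha>) (padd (pscale (uev n \<alpha> * lam1 + uev (n-1) \<alpha> * lam2) (\<alpha>, \<beta>))
                                     (pscale (\<alpha> * uev (n+1) \<alpha> * lam1 + uev n \<alpha> * lam2) (-2, l)))) = Ec (\<alpha>,\<beta>) (-2,l) (fst (cl 1 \<alpha> lam1 lam2 n)) (snd (cl 1 \<alpha> lam1 lam2 n))"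
    by (cases "even n") (simp_all add: cl_def Ec_def pscale_def padd_def Let_def algebra_simps)
  have b2: "(if even n then
                pscale (uev n \<beta>) (padd (pscale (\<beta> * uev n \<beta> * lam1 + uev (n-1) \<beta> * lam3) (\<alpha>, \<beta>))
                                     (pscale (\<beta> * (uev (n+1) \<beta> * lam1 + uev n \<beta> * lam3)) (m, -2)))
              else
                pscale (uev n \<beta>) (padd (pscale (uev n \<beta> * lam1 + uev (n-1) \<beta> * lam3) (\<alpha>, \<beta>))
                                     (pscale (\<beta> * uev (n+1) \<beta> * lam1 + uev n \<beta> * lam3) (m, -2)))) = Ec (\<alpha>,\<beta>) (m,-2) (fst (cl 1 \<beta> lam1 lam3 n)) (snd (cl 1 \<beta> lam1 lam3 n))"
    by (cases "even n") (simp_all add: cl_def Ec_def pscale_def padd_def Let_def algebra_simps)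
  have b3: "(if even n then
                pscale (uev n \<gamma>) (padd (pscale (\<gamma> * uev n \<gamma> * lam2 + m * uev (n-1) \<gamma> * lam3) (-2, l))
                                     (pscale (l * uev (n+1) \<gamma> * lam2 + \<gamma> * uev n \<gamma> * lam3) (m, -2)))
              else
                pscale (uev n \<gamma>) (padd (pscale (uev n \<gamma> * lam2 + m * uev (n-1) \<gamma> * lam3) (-2, l))
                                     (pscale (l * uev (n+1) \<gamma> * lam2 + uev n \<gamma> * lam3) (m, -2)))) = Ec (-2,l) (m,-2) (fst (cl m l lam2 lam3 n)) (snd (cl m l lam2 lam3 n))"
    unfolding cl_def ml by (cases "even n") (simp_all add: Ec_def pscale_def padd_def Let_def algebra_simps)
  show ?thesis unfolding Let_def b1 b2 b3 using C1 C2 C3 by simp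
qed

end
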